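(* Let $C>1$, $P$ a probability measure on $[0,\infty)$, and $\alpha>0$ such that $\alpha\,\mu_{P,C}\le\mathbb{E}_{t\sim P}\big[t\,\mathbf 1[t<m_P]\big]$. Then $G_{P,C}\big(\tfrac1Cm_P\big)\ge\alpha\,\mu_{P,C}$.
   Context: For $\mu\ge0$ define $G_{P,C}(\mu):=\mathbb{E}_{t\sim P}[\min\{t,C\mu\}]-\mu$. The $C$-clipped mean $\mu_{P,C}$ is the largest $\mu\ge0$ with $G_{P,C}(\mu)=0$. The $\frac1C$-median is $m_P:=\sup\{M\ge0:\mathbb{P}_{t\sim P}[t\ge M]\ge\frac1C\}$. (In the paper this is applied with $P=P_x$, the law of $\|\nabla L_\gamma(x)\|_2^2$, under the assumption that such an $\alpha=\alpha_C$ works uniformly for all $x\ne0$.) *)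

theory Defs
  imports "HOL-Probability.Probability"
begin

text \<open>Laws P of a nonnegative real random variable are modelled as real measures
  with prob_space P, sets P = sets borel and AE t in P. 0 <= t.\<close>

definition G_clip :: "real measure \<Rightarrow> real \<Rightarrow> real \<Rightarrow> real" where
  "G_clip P C \<mu> = (\<integral>t. min t (C * \<mu>) \<partial>P) - \<mu>"

definition clipped_mean :: "real measure \<Rightarrow> real \<Rightarrow> real" where
  "clipped_mean P C = (GREATEST \<mu>. 0 \<le> \<mu> \<and> G_clip P C \<mu> = 0)"

definition C_median :: "real measure \<Rightarrow> real \<Rightarrow> real" where
  "C_median P C = Sup {M. 0 \<le> M \<and> measure P {t. M \<le> t} \<ge> 1 / C}"

end

theory Submission
  imports Defs
begin

theorem mainTheorem17:
  fixes P :: "real measure" and C \<alpha> :: real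
  assumes "prob_space P" and "sets P = sets borel"
    and "AE t in P. 0 \<le> t"
    and "C > 1" and "\<alpha> > 0"
    and "\<alpha> * clipped_mean P C \<le> (\<integral>t. t * indicator {t. t < C_median P C} t \<partial>P)"
  shows "G_clip P C (C_median P C / C) \<ge> \<alpha> * clipped_mean P C"
proof -
  interpret prob_space P by fact
  define S where "S = {M. 0 \<le> M \<and> measure P {t. M \<le> t} \<ge> 1 / C}"
  define m where "m = C_median P C"
  have mS: "m = Sup S" unfolding m_def S_def C_median_def by simp
  have meas: "f \<in> borel_measurable P" if "f \<in> borel_measurable borel" for f :: "real \<Rightarrow> real"
    using that measurable_cong_sets[OF assms(2) refl, of borel] by blast
  have setsP: "{t. M \<le> t} \<in> sets P" for M :: real
    using assms(2) by (simp add: atLeast_def[symmetric])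
  have C0: "0 < 1 / C" using assms(4) by simp
  have "0 \<in> S"
  proof -
    have "measure P {t. 0 \<le> t} = 1"
      using assms(3) setsP by (simp add: prob_eq_1)
    thus ?thesis unfolding S_def using assms(4) by simp
  qed
  have dec: "decseq (\<lambda>n::nat. {t. real n \<le> t})"
    by (auto simp: decseq_def)
  have lim0: "(\<lambda>n::nat. measure P {t. real n \<le> t}) \<longlonglongrightarrow> measure P (\<Inter>n. {t. real n \<le> t})"
    by (rule finite_Lim_measure_decseq) (use setsP dec in auto)
  have "(\<Inter>n::nat. {t::real. real n \<le> t}) = {}"
    proof (rule equals0I)
    fix t assume "t \<in> (\<Inter>n::nat. {t::real. real n \<le> t})"
    moreover obtain n :: nat where "t < real n" using reals_Archimedean2 by blast
    ultimately show False by (metis InterE not_le rangeI mem_Collect_eq)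
  qed
  with lim0 have "(\<lambda>n::nat. measure P {t. real n \<le> t}) \<longlonglongrightarrow> 0" by simp
  then obtain N :: nat where N: "measure P {t. real N \<le> t} < 1 / C"
    using C0 by (metis (no_types, lifting) LIMSEQ_D diff_zero le_refl real_norm_def abs_less_iff)
  have bdd: "\<forall>M\<in>S. M \<le> real N"
  proof
    fix M assume "M \<in> S"
    show "M \<le> real N"
    proof (rule ccontr)
      assume "\<not> M \<le> real N"
      hence "measure P {t. M \<le> t} \<le> measure P {t. real N \<le> t}"
        by (intro finite_measure_mono) (auto simp: setsP)
      with N \<open>M \<in> S\<close> show False unfolding S_def by simp
    qed
  qed
  hence bddS: "bdd_above S" by (auto simp: bdd_above_def)
  have m0: "0 \<le> m" using mS \<open>0 \<in> S\<close> bddS by (simp add: cSup_upper)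
  have below: "measure P {t. M \<le> t} \<ge> 1 / C" if Mm: "M < m" for M
  proof -
    obtain M' where "M' \<in> S" "M < M'"
      using less_cSup_iff[of S M] \<open>0 \<in> S\<close> bddS Mm mS by auto
    hence "measure P {t. M' \<le> t} \<le> measure P {t. M \<le> t}"
      by (intro finite_measure_mono) (auto simp: setsP)
    with \<open>M' \<in> S\<close> show ?thesis unfolding S_def by simp
  qed
  have decm: "decseq (\<lambda>n::nat. {t. m - 1 / real (Suc n) \<le> t})"
  proof (rule decseq_SucI, rule subsetI)
    fix n :: nat and t assume "t \<in> {t. m - 1 / real (Suc (Suc n)) \<le> t}"
    moreover have "1 / real (Suc (Suc n)) \<le> 1 / real (Suc n)"
      by (intro divide_left_mono) auto
    ultimately show "t \<in> {t. m - 1 / real (Suc n) \<le> t}" by simp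
  qed
  have limm: "(\<lambda>n::nat. measure P {t. m - 1 / real (Suc n) \<le> t}) \<longlonglongrightarrow> measure P (\<Inter>n. {t. m - 1 / real (Suc n) \<le> t})"
    by (rule finite_Lim_measure_decseq) (use setsP decm in auto)
  have "(\<Inter>n::nat. {t. m - 1 / real (Suc n) \<le> t}) = {t. m \<le> t}"
  proof (intro set_eqI iffI)
    fix t assume "t \<in> (\<Inter>n::nat. {t. m - 1 / real (Suc n) \<le> t})"
    hence h: "\<forall>n::nat. m - 1 / real (Suc n) \<le> t" by blast
    show "t \<in> {t. m \<le> t}" unfolding mem_Collect_eq
    proof (rule ccontr)
      assume "\<not> m \<le> t"
      then obtain n :: nat where "1 / real (Suc n) < m - t"
        using reals_Archimedean[of "m - t"] by (auto simp: inverse_eq_divide)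
      moreover have "m - 1 / real (Suc n) \<le> t" using h by blast
      ultimately show False by linarith
    qed
  next
    fix t assume "t \<in> {t. m \<le> t}"
    hence mt: "m \<le> t" by simp
    have "m - 1 / real (Suc n) \<le> t" for n :: nat
    proof -
      have "0 \<le> 1 / real (Suc n)" by simp
      with mt show ?thesis by linarith
    qed
    thus "t \<in> (\<Inter>n::nat. {t. m - 1 / real (Suc n) \<le> t})" by blast
  qed
  with limm have limm': "(\<lambda>n::nat. measure P {t. m - 1 / real (Suc n) \<le> t}) \<longlonglongrightarrow> measure P {t. m \<le> t}"
    by simp
  have pm: "measure P {t. m \<le> t} \<ge> 1 / C"
    by (rule LIMSEQ_le_const[OF limm']) (auto intro!: below)
  have ae_bd: "AE t in P. norm (t * indicator {t. t < m} t) \<le> m"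
    using assms(3) by eventually_elim (use m0 in \<open>auto simp: indicator_def\<close>)
  have i1: "integrable P (\<lambda>t. t * indicator {t. t < m} t)"
    by (rule integrable_const_bound[OF ae_bd]) (rule meas, simp)
  have i2: "integrable P (\<lambda>t. m * indicator {t. m \<le> t} t)"
    using setsP by (intro integrable_mult_right integrable_real_indicator) (auto simp: emeasure_finite less_top[symmetric])
  have Cm: "C * (m / C) = m" using assms(4) by simp
  have eq: "(\<lambda>t. min t (C * (m / C))) = (\<lambda>t. t * indicator {t. t < m} t + m * indicator {t. m \<le> t} t)"
    unfolding Cm by (rule ext) (simp add: indicator_def min_def)
  have ind: "(\<integral>t. indicator {t. m \<le> t} t \<partial>P) = measure P {t. m \<le> t}"
  proof -
    have "{t. m \<le> t} \<inter> space P = {t. m \<le> t}" using sets.sets_into_space[OF setsP] by blast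
    thus ?thesis using Bochner_Integration.integral_indicator[of P "{t. m \<le> t}"] by simp
  qed
  have "(\<integral>t. min t (C * (m / C)) \<partial>P) = (\<integral>t. t * indicator {t. t < m} t + m * indicator {t. m \<le> t} t \<partial>P)"
    unfolding eq ..
  also have "\<dots> = (\<integral>t. t * indicator {t. t < m} t \<partial>P) + (\<integral>t. m * indicator {t. m \<le> t} t \<partial>P)"
    by (rule Bochner_Integration.integral_add[OF i1 i2])
  also have "(\<integral>t. m * indicator {t. m \<le> t} t \<partial>P) = m * measure P {t. m \<le> t}"
    by (simp only: Bochner_Integration.integral_mult_right_zero ind)
  finally have G: "G_clip P C (m / C) = (\<integral>t. t * indicator {t. t < m} t \<partial>P) + m * measure P {t. m \<le> t} - m / C"
    unfolding G_clip_def by simp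
  have "m / C \<le> m * measure P {t. m \<le> t}"
    using mult_left_mono[OF pm m0] by simp
  with G assms(6) show ?thesis unfolding m_def by simp
qed

end
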